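(* Let $L>0$ and $\sigma>0$, and let $X_1,\dots,X_n$ be i.i.d. real random variables from a symmetric distribution with $\mathbb{P}(|X_i|>\sigma)=1/2$ (e.g. uniform on $(-2\sigma,2\sigma)$). Then there is a symmetric function $K:\mathbb{R}\times\mathbb{R}\to\mathbb{R}$ satisfying $|K(x_1,x_2)-K(y_1,y_2)|\le L(|x_1-y_1|+|x_2-y_2|)$ for all $x_1,x_2,y_1,y_2$ such that, when $n\ge 8$, the kernel matrix $K=(K(X_i,X_j))_{i,j=1}^n$ satisfies $$\mathbb{P}\big(\|K-\mathbb{E}K\|>L\sigma n/8\big)\ge 1-e^{-n/8}.$$
   Context: $\|\cdot\|$ denotes the spectral norm of an $n\times n$ matrix. *)

theory Defs
  imports "HOL-Analysis.Analysis" "HOL-Probability.Probability"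
begin

definition spectral_norm :: "real^'n^'n \<Rightarrow> real" where
  "spectral_norm A = onorm (\<lambda>v. A *v v)"

end

theory Submission
  imports Defs
begin

definition clampf :: "real \<Rightarrow> real \<Rightarrow> real" where
  "clampf s t = max (-s) (min s t)"

lemma clampf_lip: "\<bar>clampf s a - clampf s b\<bar> \<le> \<bar>a - b\<bar>"
  unfolding clampf_def by (auto simp: max_def min_def abs_if)

lemma clampf_bound: "s \<ge> 0 \<Longrightarrow> \<bar>clampf s a\<bar> \<le> s"
  unfolding clampf_def by (auto simp: max_def min_def abs_if)

lemma clampf_odd: "s \<ge> 0 \<Longrightarrow> clampf s (-a) = - clampf s a"
  unfolding clampf_def by (auto simp: max_def min_def)

lemma clampf_big: "s < \<bar>a\<bar> \<Longrightarrow> s\<^sup>2 \<le> (clampf s a)\<^sup>2"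
  unfolding clampf_def by (cases "a \<ge> 0") (auto simp: max_def min_def power2_eq_square abs_if)

lemma clampf_cont: "continuous_on UNIV (clampf s)"
  unfolding clampf_def by (intro continuous_intros)

lemma clampf_meas[measurable]: "clampf s \<in> borel_measurable borel"
  by (rule borel_measurable_continuous_onI[OF clampf_cont])

lemma sn_nonneg: "spectral_norm A \<ge> 0"
  unfolding spectral_norm_def by (rule onorm_pos_le[OF matrix_vector_mul_bounded_linear])

lemma sn_lower: "norm (A *v x) \<le> spectral_norm A * norm x"
  unfolding spectral_norm_def by (rule onorm[OF matrix_vector_mul_bounded_linear])

lemma sn_lip: "\<bar>spectral_norm (A::real^'n^'n) - spectral_norm B\<bar> \<le> real CARD('n) * real CARD('n) * dist A B"
proof -
  have tri: "spectral_norm (C + D) \<le> spectral_norm C + spectral_norm D" for C D :: "real^'n^'n"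
  proof -
    have e: "(*v) (C+D) = (\<lambda>x. C *v x + D *v x)" by (rule ext) (simp add: matrix_vector_mult_add_rdistrib)
    show ?thesis unfolding spectral_norm_def e
      using onorm_triangle[OF matrix_vector_mul_bounded_linear matrix_vector_mul_bounded_linear, of C D]
      by simp
  qed
  have bnd: "spectral_norm C \<le> real CARD('n) * real CARD('n) * norm C" for C :: "real^'n^'n"
    unfolding spectral_norm_def
  proof (rule onorm_le_matrix_component)
    fix i j
    have "\<bar>C $ i $ j\<bar> \<le> norm (C $ i)" using Finite_Cartesian_Product.norm_nth_le[of "C $ i" j] by simp
    also have "\<dots> \<le> norm C" by (rule Finite_Cartesian_Product.norm_nth_le)
    finally show "\<bar>C $ i $ j\<bar> \<le> norm C" .
  qed
  have "spectral_norm A \<le> spectral_norm B + spectral_norm (A - B)"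
    using tri[of B "A - B"] by simp
  moreover have "spectral_norm B \<le> spectral_norm A + spectral_norm (B - A)"
    using tri[of A "B - A"] by simp
  moreover have "norm (B - A) = norm (A - B)" by (rule norm_minus_commute)
  ultimately show ?thesis using bnd[of "A - B"] bnd[of "B - A"] by (auto simp: dist_norm abs_if)
qed

lemma sn_cont: "continuous_on UNIV (spectral_norm :: real^'n^'n \<Rightarrow> real)"
proof (rule continuous_on_iff[THEN iffD2], intro ballI allI impI)
  fix x :: "real^'n^'n" and e :: real assume e: "0 < e"
  define c where "c = real CARD('n) * real CARD('n) + 1"
  have c: "c > 0" by (simp add: c_def add_pos_nonneg)
  show "\<exists>d>0. \<forall>x'\<in>UNIV. dist x' x < d \<longrightarrow> dist (spectral_norm x') (spectral_norm x) < e"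
  proof (intro exI[of _ "e / c"] conjI ballI impI)
    show "e / c > 0" using e c by simp
    fix y :: "real^'n^'n" assume "dist y x < e / c"
    hence "c * dist y x < e" using c by (simp add: field_simps)
    moreover have "dist (spectral_norm y) (spectral_norm x) \<le> real CARD('n) * real CARD('n) * dist y x"
      using sn_lip[of y x] by (simp add: dist_real_def)
    moreover have "real CARD('n) * real CARD('n) * dist y x \<le> c * dist y x"
      by (simp add: c_def distrib_right)
    ultimately show "dist (spectral_norm y) (spectral_norm x) < e" by linarith
  qed
qed

lemma sn_meas[measurable]: "(spectral_norm :: real^'n^'n \<Rightarrow> real) \<in> borel_measurable borel"
  by (rule borel_measurable_continuous_onI[OF sn_cont])

lemma mat_meas:
  assumes "\<And>i j. f i j \<in> borel_measurable M"
  shows "(\<lambda>\<omega>. (\<chi> i j. f i j \<omega>) :: real^'n^'m) \<in> borel_measurable M"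
proof (subst borel_measurable_euclidean_space, intro ballI)
  fix b :: "real^'n^'m" assume "b \<in> Basis"
  then obtain i u where b: "b = axis i u" and u: "u \<in> (Basis :: (real^'n) set)"
    by (auto simp: Basis_vec_def)
  then obtain j where u': "u = axis j 1" by (auto simp: Basis_vec_def)
  show "(\<lambda>\<omega>. (\<chi> i j. f i j \<omega>) \<bullet> b) \<in> borel_measurable M"
    unfolding b u' inner_axis by (simp add: assms)
qed

lemma norm_sq_vec: "(norm (x::real^'n))\<^sup>2 = (\<Sum>i\<in>UNIV. (x $ i)\<^sup>2)"
  by (simp add: norm_vec_def L2_set_def sum_nonneg)

lemma det_bound:
  fixes u Y :: "'n::finite \<Rightarrow> real" and L \<sigma> :: real
  assumes L: "L > 0" and s: "\<sigma> > 0" and uy: "\<And>i. \<sigma>\<^sup>2 * Y i \<le> (u i)\<^sup>2"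
    and Ysum: "(\<Sum>i\<in>UNIV. Y i) > real CARD('n) / 64"
  shows "spectral_norm (\<chi> i j. L * (u i + u j)) > L * \<sigma> * real CARD('n) / 8"
proof -
  define n where "n = real CARD('n)"
  have n: "n > 0" by (simp add: n_def)
  define A where "A = (\<chi> i j. L * (u i + u j) :: real^'n^'n)"
  define one :: "real^'n" where "one = (\<chi> i. 1)"
  define S where "S = (\<Sum>j\<in>UNIV. u j)"
  have Av: "A *v one = (\<chi> i. L * (n * u i + S))"
    by (simp add: A_def one_def matrix_vector_mult_def n_def S_def sum.distrib sum_distrib_left[symmetric] algebra_simps)
  have n1: "(norm one)\<^sup>2 = n" by (simp add: norm_sq_vec one_def n_def)
  have "(\<Sum>i\<in>UNIV. (n * u i + S)\<^sup>2) \<ge> (\<Sum>i\<in>UNIV. n\<^sup>2 * (u i)\<^sup>2 + 2 * n * S * u i)"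
    by (rule sum_mono) (simp add: power2_eq_square algebra_simps)
  also have "(\<Sum>i\<in>UNIV. n\<^sup>2 * (u i)\<^sup>2 + 2 * n * S * u i) = n\<^sup>2 * (\<Sum>i\<in>UNIV. (u i)\<^sup>2) + 2 * n * S * S"
    by (simp add: sum.distrib sum_distrib_left S_def)
  finally have c1: "(\<Sum>i\<in>UNIV. (n * u i + S)\<^sup>2) \<ge> n\<^sup>2 * (\<Sum>i\<in>UNIV. (u i)\<^sup>2) + 2 * n * S * S" .
  have "2 * n * S * S \<ge> 0" using n by (simp add: mult.assoc)
  hence sq1: "(\<Sum>i\<in>UNIV. (n * u i + S)\<^sup>2) \<ge> n\<^sup>2 * (\<Sum>i\<in>UNIV. (u i)\<^sup>2)" using c1 by linarith
  have "(\<Sum>i\<in>UNIV. (u i)\<^sup>2) \<ge> (\<Sum>i\<in>UNIV. \<sigma>\<^sup>2 * Y i)" by (rule sum_mono) (rule uy)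
  also have "(\<Sum>i\<in>UNIV. \<sigma>\<^sup>2 * Y i) = \<sigma>\<^sup>2 * (\<Sum>i\<in>UNIV. Y i)" by (simp add: sum_distrib_left)
  finally have c2: "(\<Sum>i\<in>UNIV. (u i)\<^sup>2) \<ge> \<sigma>\<^sup>2 * (\<Sum>i\<in>UNIV. Y i)" .
  have "\<sigma>\<^sup>2 * (\<Sum>i\<in>UNIV. Y i) > \<sigma>\<^sup>2 * (n / 64)"
    using Ysum s by (intro mult_strict_left_mono) (auto simp: n_def)
  hence sq2: "(\<Sum>i\<in>UNIV. (u i)\<^sup>2) > \<sigma>\<^sup>2 * n / 64" using c2 by simp
  have "(norm (A *v one))\<^sup>2 = L\<^sup>2 * (\<Sum>i\<in>UNIV. (n * u i + S)\<^sup>2)"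
    by (simp add: Av norm_sq_vec power_mult_distrib sum_distrib_left)
  also have "\<dots> \<ge> L\<^sup>2 * (n\<^sup>2 * (\<Sum>i\<in>UNIV. (u i)\<^sup>2))"
    using sq1 by (simp add: mult_left_mono)
  finally have "(norm (A *v one))\<^sup>2 \<ge> L\<^sup>2 * (n\<^sup>2 * (\<Sum>i\<in>UNIV. (u i)\<^sup>2))" .
  moreover have "L\<^sup>2 * (n\<^sup>2 * (\<Sum>i\<in>UNIV. (u i)\<^sup>2)) > L\<^sup>2 * (n\<^sup>2 * (\<sigma>\<^sup>2 * n / 64))"
    using sq2 L n by (intro mult_strict_left_mono) auto
  moreover have "(norm (A *v one))\<^sup>2 \<le> (spectral_norm A)\<^sup>2 * n"
  proof -
    have "norm (A *v one) \<le> spectral_norm A * norm one" by (rule sn_lower)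
    hence "(norm (A *v one))\<^sup>2 \<le> (spectral_norm A * norm one)\<^sup>2"
      by (intro power_mono) auto
    thus ?thesis by (simp add: power_mult_distrib n1)
  qed
  ultimately have "(spectral_norm A)\<^sup>2 * n > (L * \<sigma> * n / 8)\<^sup>2 * n"
    by (simp add: power2_eq_square field_simps)
  hence "(spectral_norm A)\<^sup>2 > (L * \<sigma> * n / 8)\<^sup>2" using n by simp
  hence "spectral_norm A > L * \<sigma> * n / 8"
    using sn_nonneg[of A] by (rule power_less_imp_less_base)
  thus ?thesis by (simp add: A_def n_def)
qed


theorem proposition1:
  fixes M :: "'a measure" and X :: "'n::finite \<Rightarrow> 'a \<Rightarrow> real"
    and L \<sigma> :: real
  assumes "prob_space M"
    and "L > 0" and "\<sigma> > 0"
    and "\<And>i. X i \<in> borel_measurable M"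
    and "prob_space.indep_vars M (\<lambda>_. borel) X UNIV"
    and "\<And>i j. distr M borel (X i) = distr M borel (X j)"
    and "\<And>i. distr M borel (\<lambda>\<omega>. - X i \<omega>) = distr M borel (X i)"
    and "\<And>i. measure M {\<omega> \<in> space M. \<bar>X i \<omega>\<bar> > \<sigma>} = 1/2"
  shows "\<exists>K :: real \<Rightarrow> real \<Rightarrow> real.
           (\<forall>x y. K x y = K y x) \<and>
           (\<forall>x1 x2 y1 y2. \<bar>K x1 x2 - K y1 y2\<bar> \<le> L * (\<bar>x1 - y1\<bar> + \<bar>x2 - y2\<bar>)) \<and>
           (CARD('n) \<ge> 8 \<longrightarrow>
              measure M {\<omega> \<in> space M.
                 spectral_norm (\<chi> i j. K (X i \<omega>) (X j \<omega>)
                                   - integral\<^sup>L M (\<lambda>\<eta>. K (X i \<eta>) (X j \<eta>)))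
                 > L * \<sigma> * real CARD('n) / 8}
              \<ge> 1 - exp (- real CARD('n) / 8))"
proof -
  interpret P: prob_space M by (rule assms(1))
  note Xm[measurable] = assms(4)
  define h where "h = clampf \<sigma>"
  have hm[measurable]: "h \<in> borel_measurable borel" unfolding h_def by simp
  define K where "K = (\<lambda>x y. L * (h x + h y))"
  define n where "n = real CARD('n)"
  have npos: "n > 0" by (simp add: n_def)
  have hb: "\<bar>h t\<bar> \<le> \<sigma>" for t unfolding h_def using clampf_bound assms(3) by simp
  have hint: "integrable M (\<lambda>\<omega>. h (X i \<omega>))" for i
    by (rule P.integrable_const_bound[where B=\<sigma>]) (auto simp: hb)
  have E0: "integral\<^sup>L M (\<lambda>\<omega>. h (X i \<omega>)) = 0" for i
  proof -
    have "integral\<^sup>L M (\<lambda>\<omega>. h (X i \<omega>)) = integral\<^sup>L (distr M borel (X i)) h"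
      by (rule integral_distr[symmetric]) auto
    also have "\<dots> = integral\<^sup>L (distr M borel (\<lambda>\<omega>. - X i \<omega>)) h" by (simp add: assms(7))
    also have "\<dots> = integral\<^sup>L M (\<lambda>\<omega>. h (- X i \<omega>))"
      by (rule integral_distr) auto
    also have "\<dots> = integral\<^sup>L M (\<lambda>\<omega>. - h (X i \<omega>))"
      unfolding h_def using clampf_odd assms(3) by simp
    also have "\<dots> = - integral\<^sup>L M (\<lambda>\<omega>. h (X i \<omega>))" by simp
    finally show ?thesis by simp
  qed
  have EK: "integral\<^sup>L M (\<lambda>\<eta>. K (X i \<eta>) (X j \<eta>)) = 0" for i j
    unfolding K_def using hint[of i] hint[of j] E0[of i] E0[of j] by simp
  have mat: "(\<chi> i j. K (X i \<omega>) (X j \<omega>) - integral\<^sup>L M (\<lambda>\<eta>. K (X i \<eta>) (X j \<eta>)))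
      = (\<chi> i j. L * (h (X i \<omega>) + h (X j \<omega>)))" for \<omega>
    unfolding EK by (simp add: K_def)
  define S where "S = {\<omega> \<in> space M. L * \<sigma> * n / 8 < spectral_norm (\<chi> i j. L * (h (X i \<omega>) + h (X j \<omega>)))}"
  have Sm: "S \<in> sets M"
  proof -
    have "(\<lambda>\<omega>. (\<chi> i j. L * (h (X i \<omega>) + h (X j \<omega>))) :: real^'n^'n) \<in> borel_measurable M"
      by (rule mat_meas) simp
    hence "(\<lambda>\<omega>. spectral_norm ((\<chi> i j. L * (h (X i \<omega>) + h (X j \<omega>))) :: real^'n^'n)) \<in> borel_measurable M"
      by (rule measurable_compose) (rule sn_meas)
    thus ?thesis unfolding S_def by measurable
  qed
  define g where "g = (\<lambda>t::real. if \<sigma> < \<bar>t\<bar> then 1 else (0::real))"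
  have gm[measurable]: "g \<in> borel_measurable borel" unfolding g_def by measurable
  define Y where "Y = (\<lambda>i \<omega>. g (X i \<omega>))"
  have indepY: "P.indep_vars (\<lambda>_. borel) Y UNIV"
    unfolding Y_def by (rule P.indep_vars_compose2[OF assms(5)]) simp
  interpret H: Hoeffding_ineq M UNIV Y "\<lambda>_. 0" "\<lambda>_. 1" "\<Sum>i\<in>UNIV. P.expectation (Y i)"
  proof unfold_locales
    show "finite (UNIV :: 'n set)" by simp
    show "P.indep_vars (\<lambda>_. borel) Y UNIV" by (rule indepY)
    fix i :: 'n
    show "AE x in M. Y i x \<in> {0..1}" by (rule AE_I2) (simp add: Y_def g_def)
  qed (rule reflexive)
  have EY: "P.expectation (Y i) = 1/2" for i
  proof -
    have "P.expectation (Y i) = P.expectation (indicator {\<omega> \<in> space M. \<bar>X i \<omega>\<bar> > \<sigma>})"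
      by (rule Bochner_Integration.integral_cong) (auto simp: Y_def g_def indicator_def)
    also have "\<dots> = 1/2" using assms(8)[of i] by (simp add: Int_absorb2 Collect_subset)
    finally show ?thesis .
  qed
  define \<epsilon> where "\<epsilon> = 31 * n / 64"
  have hoe: "P.prob {x \<in> space M. (\<Sum>i\<in>UNIV. Y i x) \<le> (\<Sum>i\<in>UNIV. P.expectation (Y i)) - \<epsilon>}
      \<le> exp (-2 * \<epsilon>\<^sup>2 / n)"
  proof -
    have e0: "\<epsilon> \<ge> 0" using npos by (simp add: \<epsilon>_def)
    have s0: "(\<Sum>i\<in>(UNIV::'n set). ((\<lambda>_. 1::real) i - (\<lambda>_. 0::real) i)\<^sup>2) > 0" by simp
    show ?thesis using H.Hoeffding_ineq_le[OF e0 s0] by (simp add: n_def)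
  qed
  define F where "F = {x \<in> space M. (\<Sum>i\<in>UNIV. Y i x) \<le> (\<Sum>i\<in>UNIV. P.expectation (Y i)) - \<epsilon>}"
  have Fm: "F \<in> sets M" unfolding F_def Y_def by measurable
  have Fb: "P.prob F \<le> exp (- n / 8)"
  proof -
    have "exp (-2 * \<epsilon>\<^sup>2 / n) = exp (- (961 / 2048) * n)"
      using npos by (simp add: \<epsilon>_def n_def power2_eq_square field_simps)
    also have "\<dots> \<le> exp (- n / 8)" using npos by simp
    finally have ee: "exp (-2 * \<epsilon>\<^sup>2 / n) \<le> exp (- n / 8)" .
    show ?thesis using hoe ee unfolding F_def by linarith
  qed
  have sub: "space M - F \<subseteq> S"
  proof
    fix \<omega> assume w: "\<omega> \<in> space M - F"
    have sumE: "(\<Sum>i\<in>UNIV. P.expectation (Y i)) = n / 2" by (simp add: EY n_def)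
    have "(\<Sum>i\<in>UNIV. Y i \<omega>) > n / 64" using w unfolding F_def sumE \<epsilon>_def by auto
    hence "spectral_norm (\<chi> i j. L * (h (X i \<omega>) + h (X j \<omega>))) > L * \<sigma> * real CARD('n) / 8"
    proof (intro det_bound[where Y="\<lambda>i. Y i \<omega>"] assms(2,3))
      fix i show "\<sigma>\<^sup>2 * Y i \<omega> \<le> (h (X i \<omega>))\<^sup>2"
        unfolding Y_def g_def h_def using clampf_big[of \<sigma> "X i \<omega>"] by auto
    qed (simp add: n_def)
    thus "\<omega> \<in> S" using w unfolding S_def n_def by auto
  qed
  have "P.prob S \<ge> P.prob (space M - F)" by (rule P.finite_measure_mono[OF sub Sm])
  moreover have "P.prob (space M - F) = 1 - P.prob F" by (rule P.prob_compl[OF Fm])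
  ultimately have fin: "P.prob S \<ge> 1 - exp (- n / 8)" using Fb by linarith
  show ?thesis
  proof (intro exI[of _ K] conjI allI impI)
    fix x y show "K x y = K y x" by (simp add: K_def)
  next
    fix x1 x2 y1 y2
    have "\<bar>K x1 x2 - K y1 y2\<bar> = L * \<bar>(h x1 - h y1) + (h x2 - h y2)\<bar>"
    proof -
      have "K x1 x2 - K y1 y2 = L * ((h x1 - h y1) + (h x2 - h y2))" by (simp add: K_def algebra_simps)
      thus ?thesis using assms(2) by (simp add: abs_mult)
    qed
    also have "\<dots> \<le> L * (\<bar>h x1 - h y1\<bar> + \<bar>h x2 - h y2\<bar>)"
      using assms(2) by (intro mult_left_mono abs_triangle_ineq) auto
    also have "\<dots> \<le> L * (\<bar>x1 - y1\<bar> + \<bar>x2 - y2\<bar>)"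
      using assms(2) unfolding h_def by (intro mult_left_mono add_mono clampf_lip) auto
    finally show "\<bar>K x1 x2 - K y1 y2\<bar> \<le> L * (\<bar>x1 - y1\<bar> + \<bar>x2 - y2\<bar>)" .
  next
    show "measure M {\<omega> \<in> space M.
                 spectral_norm (\<chi> i j. K (X i \<omega>) (X j \<omega>)
                                   - integral\<^sup>L M (\<lambda>\<eta>. K (X i \<eta>) (X j \<eta>)))
                 > L * \<sigma> * real CARD('n) / 8}
              \<ge> 1 - exp (- real CARD('n) / 8)"
      using fin unfolding mat S_def n_def by simp
  qed
qed

end
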